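(* There exists no binary orthogonal array of parameters $(n,M,\tau)=(10,192,5)$, i.e. of length $10$, cardinality $192=6\cdot 2^5$ and strength $5$.
   Context: A binary orthogonal array of parameters $(n,M,\tau)$ is the multiset of rows of an $M\times n$ binary matrix such that every $M\times\tau$ submatrix contains each ordered $\tau$-tuple of $\{0,1\}^\tau$ exactly $M/2^\tau$ times as rows. *)

theory Defs
  imports Main "HOL-Library.Multiset"
begin

definition binary_OA :: "nat \<Rightarrow> nat \<Rightarrow> nat \<Rightarrow> bool list multiset \<Rightarrow> bool" where
  "binary_OA n M \<tau> C \<longleftrightarrow>
     size C = M \<and>
     (\<forall>r \<in># C. length r = n) \<and>
     \<tau> \<le> n \<and>
     (\<forall>cols t. distinct cols \<and> length cols = \<tau> \<and> set cols \<subseteq> {0..<n} \<and> length t = \<tau> \<longrightarrow>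
        2 ^ \<tau> * size (filter_mset (\<lambda>r. map (\<lambda>i. r ! i) cols = t) C) = M)"

end

theory Submission
  imports Defs
begin


lemma GC:
  assumes "finite u" "v \<subseteq> u" "card v \<le> m"
  shows "card {w. v \<subseteq> w \<and> w \<subseteq> u \<and> card w = m} = (card u - card v) choose (m - card v)"
proof -
  have fv: "finite v" using assms finite_subset by blast
  have eq: "{w. v \<subseteq> w \<and> w \<subseteq> u \<and> card w = m} = (\<lambda>x. x \<union> v) ` {x. x \<subseteq> u - v \<and> card x = m - card v}"
  proof (rule set_eqI, rule iffI)
    fix w assume "w \<in> {w. v \<subseteq> w \<and> w \<subseteq> u \<and> card w = m}"
    then have w: "v \<subseteq> w" "w \<subseteq> u" "card w = m" by auto
    have fw: "finite w" using w assms finite_subset by blast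
    have "card (w - v) = m - card v" using w fw by (simp add: card_Diff_subset fv)
    moreover have "w = (w - v) \<union> v" using w by auto
    ultimately show "w \<in> (\<lambda>x. x \<union> v) ` {x. x \<subseteq> u - v \<and> card x = m - card v}"
      using w by (intro image_eqI[of _ _ "w - v"]) auto
  next
    fix w assume "w \<in> (\<lambda>x. x \<union> v) ` {x. x \<subseteq> u - v \<and> card x = m - card v}"
    then obtain x where x: "x \<subseteq> u - v" "card x = m - card v" "w = x \<union> v" by auto
    have fx: "finite x" using x assms finite_subset by blast
    have "card (x \<union> v) = card x + card v" using x fx fv by (intro card_Un_disjoint) auto
    then have "card w = card x + card v" using x by simp
    then show "w \<in> {w. v \<subseteq> w \<and> w \<subseteq> u \<and> card w = m}" using x assms by auto
  qed
  have inj: "inj_on (\<lambda>x. x \<union> v) {x. x \<subseteq> u - v \<and> card x = m - card v}"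
    by (rule inj_onI) auto
  have "card {w. v \<subseteq> w \<and> w \<subseteq> u \<and> card w = m} = card {x. x \<subseteq> u - v \<and> card x = m - card v}"
    unfolding eq using inj by (rule card_image)
  also have "\<dots> = card (u - v) choose (m - card v)" using assms by (intro n_subsets) auto
  also have "card (u - v) = card u - card v" using assms fv by (simp add: card_Diff_subset)
  finally show ?thesis .
qed

lemma WDC:
  fixes g :: "'b \<Rightarrow> int"
  assumes "finite A" "finite B"
  shows "(\<Sum>u\<in>A. \<Sum>w\<in>{w\<in>B. R w u}. g w) = (\<Sum>w\<in>B. g w * int (card {u\<in>A. R w u}))"
proof -
  have "(\<Sum>u\<in>A. \<Sum>w\<in>{w\<in>B. R w u}. g w) = (\<Sum>u\<in>A. \<Sum>w\<in>B. if R w u then g w else 0)"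
    using assms by (simp add: sum.inter_filter)
  also have "\<dots> = (\<Sum>w\<in>B. \<Sum>u\<in>A. if R w u then g w else 0)" by (rule sum.swap)
  also have "\<dots> = (\<Sum>w\<in>B. g w * int (card {u\<in>A. R w u}))"
  proof (rule sum.cong[OF refl])
    fix w
    have "(\<Sum>u\<in>A. if R w u then g w else 0) = (\<Sum>u\<in>{u\<in>A. R w u}. g w)"
      by (rule sum.inter_filter[symmetric]) (rule assms)
    also have "\<dots> = g w * int (card {u\<in>A. R w u})" by simp
    finally show "(\<Sum>u\<in>A. if R w u then g w else 0) = g w * int (card {u\<in>A. R w u})" .
  qed
  finally show ?thesis .
qed



lemma comb:
  fixes Od :: "nat set set"
  assumes Osub: "Od \<subseteq> {V. V \<subseteq> {0..<10} \<and> 6 \<le> card V}"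
    and cond: "\<And>U. U \<subseteq> {0..<10} \<Longrightarrow> 7 \<le> card U \<Longrightarrow> odd (card {V\<in>Od. V \<subseteq> U})"
  shows "40 \<le> card Od"
proof -
  define N where "N = {0..<10::nat}"
  define Sb where "Sb j = {A. A \<subseteq> N \<and> card A = j}" for j
  define Oj where "Oj j = {V\<in>Od. card V = j}" for j
  have finN: "finite N" by (simp add: N_def)
  have cN: "card N = 10" by (simp add: N_def)
  have finSb: "finite (Sb j)" for j unfolding Sb_def using finN by simp
  have finOd: "finite Od"
  proof (rule finite_subset)
    show "Od \<subseteq> Pow N" using Osub unfolding N_def by auto
  qed (simp add: finN)
  have finOj: "finite (Oj j)" for j unfolding Oj_def using finOd by simp
  have OjSb: "Oj j \<subseteq> Sb j" for j using Osub unfolding Oj_def Sb_def N_def by auto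
  have cSb: "card (Sb j) = 10 choose j" for j unfolding Sb_def using n_subsets[OF finN] cN by simp
  have sup_count: "card {w\<in>Sb m. v \<subseteq> w \<and> w \<subseteq> u} = (card u - card v) choose (m - card v)"
    if "u \<subseteq> N" "v \<subseteq> u" "card v \<le> m" for u v m
  proof -
    have "{w\<in>Sb m. v \<subseteq> w \<and> w \<subseteq> u} = {w. v \<subseteq> w \<and> w \<subseteq> u \<and> card w = m}"
      using that unfolding Sb_def by auto
    moreover have "finite u" using that finN finite_subset by blast
    ultimately show ?thesis using GC[of u v m] that by simp
  qed
  have split: "card {V\<in>Od. V \<subseteq> u} = (\<Sum>j\<in>{6..<m}. card {V\<in>Oj j. V \<subseteq> u}) + (if u \<in> Od then 1 else 0)"
    if u: "u \<in> Sb m" for u m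
  proof -
    have uN: "u \<subseteq> N" and cu: "card u = m" using u unfolding Sb_def by auto
    have fu: "finite u" using uN finN finite_subset by blast
    define X where "X = (\<Union>j\<in>{6..<m}. {V\<in>Oj j. V \<subseteq> u})"
    define Y where "Y = (if u \<in> Od then {u} else {})"
    have eq: "{V\<in>Od. V \<subseteq> u} = X \<union> Y"
    proof (rule set_eqI, rule iffI)
      fix V assume V: "V \<in> {V\<in>Od. V \<subseteq> u}"
      then have VO: "V \<in> Od" and Vu: "V \<subseteq> u" by auto
      have c6: "6 \<le> card V" using Osub VO by auto
      have cm: "card V \<le> m" using card_mono[OF fu Vu] cu by simp
      show "V \<in> X \<union> Y"
      proof (cases "card V = m")
        case True
        then have "V = u" using card_subset_eq[OF fu Vu] cu by simp
        then show ?thesis using VO unfolding Y_def by simp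
      next
        case False
        then have "card V \<in> {6..<m}" using c6 cm by simp
        then show ?thesis unfolding X_def Oj_def using VO Vu by blast
      qed
    next
      fix V assume "V \<in> X \<union> Y"
      then show "V \<in> {V\<in>Od. V \<subseteq> u}"
        unfolding X_def Y_def Oj_def by (cases "u \<in> Od") auto
    qed
    have d1: "X \<inter> Y = {}"
    proof -
      have "u \<notin> X" unfolding X_def Oj_def using cu by auto
      then show ?thesis unfolding Y_def by auto
    qed
    have f1: "finite X" unfolding X_def using finOj by auto
    have fY: "finite Y" unfolding Y_def by simp
    have "card {V\<in>Od. V \<subseteq> u} = card X + card Y"
      unfolding eq using f1 fY d1 by (rule card_Un_disjoint)
    moreover have "card X = (\<Sum>j\<in>{6..<m}. card {V\<in>Oj j. V \<subseteq> u})"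
      unfolding X_def
    proof (rule card_UN_disjoint)
      show "finite {6..<m}" by simp
      show "\<forall>i\<in>{6..<m}. finite {V \<in> Oj i. V \<subseteq> u}" using finOj by simp
      show "\<forall>i\<in>{6..<m}. \<forall>j\<in>{6..<m}. i \<noteq> j \<longrightarrow> {V \<in> Oj i. V \<subseteq> u} \<inter> {V \<in> Oj j. V \<subseteq> u} = {}"
        unfolding Oj_def by blast
    qed
    moreover have "card Y = (if u \<in> Od then 1 else 0)" unfolding Y_def by simp
    ultimately show ?thesis by simp
  qed
  have r67: "{6..<7::nat} = {6}" and r68: "{6..<8::nat} = {6,7}" and r69: "{6..<9::nat} = {6,7,8}"
    and r610: "{6..<10::nat} = {6,7,8,9}" by auto
  define c where "c w = int (card {v\<in>Oj 6. v \<subseteq> w})" for w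
  define Ind where "Ind w = (if w \<in> Od then 1 else (0::int))" for w
  define exc where "exc w = c w - (1 - Ind w)" for w
  have F1: "odd (c w + Ind w)" if "w \<in> Sb 7" for w
  proof -
    have "card {V\<in>Od. V \<subseteq> w} = card {V\<in>Oj 6. V \<subseteq> w} + (if w \<in> Od then 1 else 0)"
      using split[OF that] by (simp add: r67)
    moreover have "odd (card {V\<in>Od. V \<subseteq> w})" using cond that unfolding Sb_def N_def by auto
    ultimately show ?thesis unfolding c_def Ind_def by (auto split: if_splits)
  qed
  have exc_ev: "even (exc w) \<and> 0 \<le> exc w" if "w \<in> Sb 7" for w
    using F1[OF that] unfolding exc_def Ind_def c_def
    by (cases "w \<in> Od") (auto simp: odd_pos)
  have indsum: "(\<Sum>w\<in>A. if P w then 1 else 0::int) = int (card {w\<in>A. P w})" if "finite A" for A and P :: "nat set \<Rightarrow> bool"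
    using sum.inter_filter[OF that, of "\<lambda>_. 1::int" P] by simp
  have OjSb': "{w\<in>Sb j. w \<in> Od} = Oj j" for j using OjSb unfolding Oj_def Sb_def by auto
  define k where "k = card (Oj 6)"
  define e3 where "e3 = card (Oj 7)"
  define e2 where "e2 = card (Oj 8)"
  define o1 where "o1 = card (Oj 9)"
  have F2: "(\<Sum>w\<in>Sb 7. c w) = 4 * int k"
  proof -
    have "(\<Sum>w\<in>Sb 7. c w) = (\<Sum>w\<in>Sb 7. \<Sum>v\<in>{v\<in>Oj 6. v \<subseteq> w}. 1)" unfolding c_def by simp
    also have "\<dots> = (\<Sum>v\<in>Oj 6. 1 * int (card {w\<in>Sb 7. v \<subseteq> w}))"
      by (rule WDC[OF finSb finOj])
    also have "\<dots> = (\<Sum>v\<in>Oj 6. 4)"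
    proof (rule sum.cong[OF refl])
      fix v assume "v \<in> Oj 6"
      then have v: "v \<subseteq> N" "card v = 6" using OjSb unfolding Sb_def by auto
      have "{w\<in>Sb 7. v \<subseteq> w} = {w\<in>Sb 7. v \<subseteq> w \<and> w \<subseteq> N}" unfolding Sb_def by auto
      then have "card {w\<in>Sb 7. v \<subseteq> w} = 4" using sup_count[of N v 7] v cN by simp
      then show "1 * int (card {w\<in>Sb 7. v \<subseteq> w}) = 4" by simp
    qed
    finally show ?thesis unfolding k_def by simp
  qed
  have key: "int (m - 6) * int (card {v\<in>Oj 6. v \<subseteq> u}) = int (m choose 7) - int (card {w\<in>Oj 7. w \<subseteq> u}) + (\<Sum>w\<in>{w\<in>Sb 7. w \<subseteq> u}. exc w)
         \<and> even (\<Sum>w\<in>{w\<in>Sb 7. w \<subseteq> u}. exc w) \<and> 0 \<le> (\<Sum>w\<in>{w\<in>Sb 7. w \<subseteq> u}. exc w)"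
    if u: "u \<in> Sb m" "7 \<le> m" for u m
  proof -
    have uN: "u \<subseteq> N" and cu: "card u = m" using u unfolding Sb_def by auto
    define F where "F = {w\<in>Sb 7. w \<subseteq> u}"
    have finF: "finite F" unfolding F_def using finSb by simp
    have cF: "card F = m choose 7"
    proof -
      have "F = {w\<in>Sb 7. {} \<subseteq> w \<and> w \<subseteq> u}" unfolding F_def by auto
      then show ?thesis using sup_count[of u "{}" 7] uN cu by simp
    qed
    have s1: "(\<Sum>w\<in>F. c w) = int (m - 6) * int (card {v\<in>Oj 6. v \<subseteq> u})"
    proof -
      have "(\<Sum>w\<in>F. c w) = (\<Sum>w\<in>F. \<Sum>v\<in>{v\<in>{v\<in>Oj 6. v \<subseteq> u}. v \<subseteq> w}. 1)"
      proof (rule sum.cong[OF refl])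
        fix w assume "w \<in> F"
        then have "{v\<in>Oj 6. v \<subseteq> w} = {v\<in>{v\<in>Oj 6. v \<subseteq> u}. v \<subseteq> w}" unfolding F_def by auto
        then show "c w = (\<Sum>v\<in>{v\<in>{v\<in>Oj 6. v \<subseteq> u}. v \<subseteq> w}. 1)" unfolding c_def by simp
      qed
      also have "\<dots> = (\<Sum>v\<in>{v\<in>Oj 6. v \<subseteq> u}. 1 * int (card {w\<in>F. v \<subseteq> w}))"
        using finOj by (intro WDC[OF finF]) simp
      also have "\<dots> = (\<Sum>v\<in>{v\<in>Oj 6. v \<subseteq> u}. int (m - 6))"
      proof (rule sum.cong[OF refl])
        fix v assume "v \<in> {v\<in>Oj 6. v \<subseteq> u}"
        then have v: "v \<subseteq> u" "card v = 6" using OjSb unfolding Sb_def by auto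
        have "{w\<in>F. v \<subseteq> w} = {w\<in>Sb 7. v \<subseteq> w \<and> w \<subseteq> u}" unfolding F_def by auto
        then have "card {w\<in>F. v \<subseteq> w} = (m - 6) choose 1" using sup_count[of u v 7] v uN cu by simp
        then show "1 * int (card {w\<in>F. v \<subseteq> w}) = int (m - 6)" by simp
      qed
      finally show ?thesis by simp
    qed
    have s2: "(\<Sum>w\<in>F. c w) = (\<Sum>w\<in>F. 1) - (\<Sum>w\<in>F. if w \<in> Od then 1 else 0) + (\<Sum>w\<in>F. exc w)"
      unfolding exc_def Ind_def by (simp add: sum_subtractf sum.distrib)
    have s3: "(\<Sum>w\<in>F. if w \<in> Od then 1 else 0) = int (card {w\<in>Oj 7. w \<subseteq> u})"
    proof -
      have "{w\<in>F. w \<in> Od} = {w\<in>Oj 7. w \<subseteq> u}" unfolding F_def using OjSb'[of 7] by auto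
      then show ?thesis using indsum[OF finF, of "\<lambda>w. w \<in> Od"] by simp
    qed
    have ev: "even (\<Sum>w\<in>F. exc w)" by (rule dvd_sum) (use exc_ev F_def in auto)
    have nn: "0 \<le> (\<Sum>w\<in>F. exc w)" by (rule sum_nonneg) (use exc_ev F_def in auto)
    show ?thesis using s1 s2 s3 ev nn cF unfolding F_def[symmetric] by simp
  qed
  have P8: "2 \<le> int (card {w\<in>Oj 7. w \<subseteq> u}) + (\<Sum>w\<in>{w\<in>Sb 7. w \<subseteq> u}. exc w)"
    if u: "u \<in> Sb 8" "u \<notin> Od" for u
  proof -
    define d where "d = int (card {v\<in>Oj 6. v \<subseteq> u})"
    define E where "E = int (card {w\<in>Oj 7. w \<subseteq> u})"
    define X where "X = (\<Sum>w\<in>{w\<in>Sb 7. w \<subseteq> u}. exc w)"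
    have n87: "(8::nat) choose 7 = 8" by (simp add: numeral_eq_Suc)
    have k: "2 * d = 8 - E + X" "even X" "0 \<le> X"
      using key[OF u(1)] n87 unfolding d_def E_def X_def by simp_all
    have "card {V\<in>Od. V \<subseteq> u} = card {V\<in>Oj 6. V \<subseteq> u} + card {V\<in>Oj 7. V \<subseteq> u}"
      using split[OF u(1)] u(2) by (simp add: r68)
    moreover have "odd (card {V\<in>Od. V \<subseteq> u})" using cond u unfolding Sb_def N_def by auto
    ultimately have "odd (d + E)" unfolding d_def E_def by simp
    moreover have "0 \<le> E" unfolding E_def by simp
    ultimately have "2 \<le> E + X" using k by presburger
    then show ?thesis unfolding E_def X_def .
  qed
  have P8sum: "(\<Sum>u\<in>Sb 8. int (card {w\<in>Oj 7. w \<subseteq> u}) + (\<Sum>w\<in>{w\<in>Sb 7. w \<subseteq> u}. exc w))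
      = 3 * int e3 + 3 * (\<Sum>w\<in>Sb 7. exc w)"
  proof -
    have "(\<Sum>u\<in>Sb 8. int (card {w\<in>Oj 7. w \<subseteq> u}) + (\<Sum>w\<in>{w\<in>Sb 7. w \<subseteq> u}. exc w))
        = (\<Sum>u\<in>Sb 8. \<Sum>w\<in>{w\<in>Sb 7. w \<subseteq> u}. Ind w + exc w)"
    proof (rule sum.cong[OF refl])
      fix u assume "u \<in> Sb 8"
      have "{w\<in>{w\<in>Sb 7. w \<subseteq> u}. w \<in> Od} = {w\<in>Oj 7. w \<subseteq> u}" using OjSb'[of 7] by auto
      then have "(\<Sum>w\<in>{w\<in>Sb 7. w \<subseteq> u}. Ind w) = int (card {w\<in>Oj 7. w \<subseteq> u})"
        unfolding Ind_def using indsum[of "{w\<in>Sb 7. w \<subseteq> u}" "\<lambda>w. w \<in> Od"] finSb by simp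
      then show "int (card {w\<in>Oj 7. w \<subseteq> u}) + (\<Sum>w\<in>{w\<in>Sb 7. w \<subseteq> u}. exc w)
          = (\<Sum>w\<in>{w\<in>Sb 7. w \<subseteq> u}. Ind w + exc w)" by (simp add: sum.distrib)
    qed
    also have "\<dots> = (\<Sum>w\<in>Sb 7. (Ind w + exc w) * int (card {u\<in>Sb 8. w \<subseteq> u}))"
      by (rule WDC[OF finSb finSb])
    also have "\<dots> = (\<Sum>w\<in>Sb 7. 3 * Ind w + 3 * exc w)"
    proof (rule sum.cong[OF refl])
      fix w assume "w \<in> Sb 7"
      then have w: "w \<subseteq> N" "card w = 7" unfolding Sb_def by auto
      have "{u\<in>Sb 8. w \<subseteq> u} = {u\<in>Sb 8. w \<subseteq> u \<and> u \<subseteq> N}" unfolding Sb_def by auto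
      then have "card {u\<in>Sb 8. w \<subseteq> u} = 3" using sup_count[of N w 8] w cN by simp
      then show "(Ind w + exc w) * int (card {u\<in>Sb 8. w \<subseteq> u}) = 3 * Ind w + 3 * exc w" by simp
    qed
    also have "\<dots> = 3 * (\<Sum>w\<in>Sb 7. Ind w) + 3 * (\<Sum>w\<in>Sb 7. exc w)"
      by (simp add: sum.distrib sum_distrib_left)
    also have "(\<Sum>w\<in>Sb 7. Ind w) = int e3"
      unfolding Ind_def e3_def using indsum[of "Sb 7" "\<lambda>w. w \<in> Od"] finSb OjSb'[of 7] by simp
    finally show ?thesis .
  qed
  have excsum: "(\<Sum>w\<in>Sb 7. exc w) = 4 * int k - 120 + int e3"
  proof -
    have "(\<Sum>w\<in>Sb 7. exc w) = (\<Sum>w\<in>Sb 7. c w) - (\<Sum>w\<in>Sb 7. 1) + (\<Sum>w\<in>Sb 7. Ind w)"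
      unfolding exc_def by (simp add: sum_subtractf sum.distrib)
    moreover have "(\<Sum>w\<in>Sb 7. Ind w) = int e3"
      unfolding Ind_def e3_def using indsum[of "Sb 7" "\<lambda>w. w \<in> Od"] finSb OjSb'[of 7] by simp
    moreover have "(\<Sum>w\<in>Sb 7. (1::int)) = 120" using cSb[of 7] by (simp add: numeral_eq_Suc)
    ultimately show ?thesis using F2 by simp
  qed
  have P8low: "2 * (45 - int e2) \<le> (\<Sum>u\<in>Sb 8. int (card {w\<in>Oj 7. w \<subseteq> u}) + (\<Sum>w\<in>{w\<in>Sb 7. w \<subseteq> u}. exc w))"
  proof -
    have "(\<Sum>u\<in>Sb 8. 2 - 2 * Ind u) \<le> (\<Sum>u\<in>Sb 8. int (card {w\<in>Oj 7. w \<subseteq> u}) + (\<Sum>w\<in>{w\<in>Sb 7. w \<subseteq> u}. exc w))"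
    proof (rule sum_mono)
      fix u assume u: "u \<in> Sb 8"
      show "2 - 2 * Ind u \<le> int (card {w\<in>Oj 7. w \<subseteq> u}) + (\<Sum>w\<in>{w\<in>Sb 7. w \<subseteq> u}. exc w)"
      proof (cases "u \<in> Od")
        case True
        have "0 \<le> (\<Sum>w\<in>{w\<in>Sb 7. w \<subseteq> u}. exc w)" using key[OF u] by simp
        then show ?thesis using True unfolding Ind_def by simp
      next
        case False
        then show ?thesis using P8[OF u False] unfolding Ind_def by simp
      qed
    qed
    moreover have "(\<Sum>u\<in>Sb 8. 2 - 2 * Ind u) = 2 * 45 - 2 * int e2"
    proof -
      have "(\<Sum>u\<in>Sb 8. 2 - 2 * Ind u) = 2 * (\<Sum>u\<in>Sb 8. (1::int)) - 2 * (\<Sum>u\<in>Sb 8. Ind u)"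
        by (simp add: sum_subtractf sum_distrib_left)
      moreover have "(\<Sum>u\<in>Sb 8. Ind u) = int e2"
        unfolding Ind_def e2_def using indsum[of "Sb 8" "\<lambda>w. w \<in> Od"] finSb OjSb'[of 8] by simp
      moreover have "(\<Sum>u\<in>Sb 8. (1::int)) = 45" using cSb[of 8] by (simp add: numeral_eq_Suc)
      ultimately show ?thesis by simp
    qed
    ultimately show ?thesis by simp
  qed
  have P9: "1 \<le> card {V\<in>Oj 8. V \<subseteq> u}" if u: "u \<in> Sb 9" "u \<notin> Od" for u
  proof -
    define d where "d = int (card {v\<in>Oj 6. v \<subseteq> u})"
    define E where "E = int (card {w\<in>Oj 7. w \<subseteq> u})"
    define P where "P = int (card {w\<in>Oj 8. w \<subseteq> u})"
    define X where "X = (\<Sum>w\<in>{w\<in>Sb 7. w \<subseteq> u}. exc w)"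
    have n97: "(9::nat) choose 7 = 36" by (simp add: numeral_eq_Suc)
    have k: "3 * d = 36 - E + X" "even X"
      using key[OF u(1)] n97 unfolding d_def E_def X_def by simp_all
    have "card {V\<in>Od. V \<subseteq> u} = card {V\<in>Oj 6. V \<subseteq> u} + card {V\<in>Oj 7. V \<subseteq> u} + card {V\<in>Oj 8. V \<subseteq> u}"
      using split[OF u(1)] u(2) by (simp add: r69)
    moreover have "odd (card {V\<in>Od. V \<subseteq> u})" using cond u unfolding Sb_def N_def by auto
    ultimately have "odd (d + E + P)" unfolding d_def E_def P_def by simp
    then have "odd P" using k by presburger
    then have "P \<noteq> 0" by auto
    then show ?thesis unfolding P_def by simp
  qed
  have P9sum: "10 \<le> int o1 + 2 * int e2"
  proof -
    have "(\<Sum>u\<in>Sb 9. (1::int)) \<le> (\<Sum>u\<in>Sb 9. Ind u + int (card {V\<in>Oj 8. V \<subseteq> u}))"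
    proof (rule sum_mono)
      fix u assume u: "u \<in> Sb 9"
      show "1 \<le> Ind u + int (card {V\<in>Oj 8. V \<subseteq> u})"
        using P9[OF u] unfolding Ind_def by (cases "u \<in> Od") auto
    qed
    moreover have "(\<Sum>u\<in>Sb 9. (1::int)) = 10" using cSb[of 9] by (simp add: numeral_eq_Suc)
    moreover have "(\<Sum>u\<in>Sb 9. Ind u) = int o1"
      unfolding Ind_def o1_def using indsum[of "Sb 9" "\<lambda>w. w \<in> Od"] finSb OjSb'[of 9] by simp
    moreover have "(\<Sum>u\<in>Sb 9. int (card {V\<in>Oj 8. V \<subseteq> u})) = 2 * int e2"
    proof -
      have "(\<Sum>u\<in>Sb 9. int (card {V\<in>Oj 8. V \<subseteq> u})) = (\<Sum>u\<in>Sb 9. \<Sum>V\<in>{V\<in>Oj 8. V \<subseteq> u}. 1)" by simp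
      also have "\<dots> = (\<Sum>V\<in>Oj 8. 1 * int (card {u\<in>Sb 9. V \<subseteq> u}))"
        by (rule WDC[OF finSb finOj])
      also have "\<dots> = (\<Sum>V\<in>Oj 8. 2)"
      proof (rule sum.cong[OF refl])
        fix v assume "v \<in> Oj 8"
        then have v: "v \<subseteq> N" "card v = 8" using OjSb unfolding Sb_def by auto
        have "{w\<in>Sb 9. v \<subseteq> w} = {w\<in>Sb 9. v \<subseteq> w \<and> w \<subseteq> N}" unfolding Sb_def by auto
        then have "card {w\<in>Sb 9. v \<subseteq> w} = 2" using sup_count[of N v 9] v cN by simp
        then show "1 * int (card {w\<in>Sb 9. v \<subseteq> w}) = 2" by simp
      qed
      finally show ?thesis unfolding e2_def by simp
    qed
    ultimately show ?thesis by (simp add: sum.distrib)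
  qed
  have tot: "int k + int e3 + int e2 + int o1 \<le> int (card Od)"
  proof -
    have "card (\<Union>j\<in>{6..<10}. Oj j) = (\<Sum>j\<in>{6..<10}. card (Oj j))"
      using finOj by (intro card_UN_disjoint) (auto simp: Oj_def)
    moreover have "card (\<Union>j\<in>{6..<10}. Oj j) \<le> card Od"
      using finOd by (intro card_mono) (auto simp: Oj_def)
    ultimately show ?thesis unfolding k_def e3_def e2_def o1_def by (simp add: r610)
  qed
  show ?thesis
  proof (rule ccontr)
    assume "\<not> 40 \<le> card Od"
    then have "int (card Od) \<le> 39" by simp
    moreover have "0 \<le> int e3" "0 \<le> int o1" "0 \<le> int e2" "0 \<le> int k" by simp_all
    moreover have "2 * (45 - int e2) \<le> 3 * int e3 + 3 * (4 * int k - 120 + int e3)"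
      using P8low unfolding P8sum excsum .
    then have "450 \<le> 12 * int k + 6 * int e3 + 2 * int e2" by (simp add: algebra_simps)
    ultimately show False using tot P9sum by linarith
  qed
qed



definition psi :: "(nat \<Rightarrow> bool) \<Rightarrow> nat set \<Rightarrow> bool list \<Rightarrow> int" where
  "psi y U r = (\<Prod>i\<in>U. if r ! i = y i then 1 else -1)"

lemma sum_mset_split:
  "sum_mset (image_mset g M) = sum_mset (image_mset g (filter_mset Q M)) + sum_mset (image_mset g (filter_mset (\<lambda>x. \<not> Q x) M))"
proof -
  have "M = filter_mset Q M + filter_mset (\<lambda>x. \<not> Q x) M" by (rule multiset_partition)
  then show ?thesis by (metis image_mset_union sum_mset.union)
qed

locale oa =
  fixes C :: "bool list multiset"
  assumes OA: "binary_OA 10 192 5 C"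
begin

lemma size_C: "size C = 192" using OA by (simp add: binary_OA_def)
lemma len_C: "r \<in># C \<Longrightarrow> length r = 10" using OA by (simp add: binary_OA_def)

lemma count_base:
  assumes "W \<subseteq> {0..<10}" "card W = 5"
  shows "2 ^ card W * size (filter_mset (\<lambda>r. \<forall>i\<in>W. r ! i = f i) C) = 192"
proof -
  have fin: "finite W" using assms(1) finite_subset by blast
  define cols where "cols = sorted_list_of_set W"
  have d: "distinct cols" "set cols = W" "length cols = 5" using fin assms by (auto simp: cols_def)
  have H: "\<forall>cols t. distinct cols \<and> length cols = 5 \<and> set cols \<subseteq> {0..<10} \<and> length t = 5 \<longrightarrow>
        2 ^ 5 * size (filter_mset (\<lambda>r. map (\<lambda>i. r ! i) cols = t) C) = 192"
    using OA unfolding binary_OA_def by blast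
  have "2 ^ 5 * size (filter_mset (\<lambda>r. map (\<lambda>i. r ! i) cols = map f cols) C) = 192"
    using H[rule_format, of cols "map f cols"] d assms(1) by simp
  moreover have "(\<lambda>r. map (\<lambda>i. r ! i) cols = map f cols) = (\<lambda>r. \<forall>i\<in>W. r ! i = f i)"
    using d(2) by (auto simp: map_eq_conv)
  ultimately show ?thesis using assms(2) by simp
qed

lemma count_W:
  assumes "W \<subseteq> {0..<10}" "card W \<le> 5"
  shows "2 ^ card W * size (filter_mset (\<lambda>r. \<forall>i\<in>W. r ! i = f i) C) = 192"
  using assms
proof (induction "5 - card W" arbitrary: W f)
  case 0
  then show ?case using count_base by simp
next
  case (Suc k)
  have fin: "finite W" using Suc.prems(1) finite_subset by blast
  have "{0..<10} - W \<noteq> {}"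
  proof
    assume "{0..<10} - W = {}"
    then have "{0..<10::nat} \<subseteq> W" by auto
    then have "card {0..<10::nat} \<le> card W" using fin card_mono by blast
    then show False using Suc by simp
  qed
  then obtain j where j: "j \<in> {0..<10}" "j \<notin> W" by blast
  let ?P = "\<lambda>r. \<forall>i\<in>W. r ! i = f i"
  have cW: "card (insert j W) = Suc (card W)" using fin j by simp
  have A: "2 ^ card (insert j W) * size (filter_mset (\<lambda>r. \<forall>i\<in>insert j W. r ! i = (f(j:=b)) i) C) = 192" for b
    using Suc.hyps(1)[of "insert j W" "f(j:=b)"] Suc.hyps(2) Suc.prems j cW by auto
  have e: "(\<lambda>r. \<forall>i\<in>insert j W. r ! i = (f(j:=b)) i) = (\<lambda>r. ?P r \<and> r ! j = b)" for b
    using j by (auto simp: fun_eq_iff)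
  have "filter_mset ?P C = filter_mset (\<lambda>r. ?P r \<and> r ! j = True) C + filter_mset (\<lambda>r. ?P r \<and> r ! j = False) C"
    by (subst multiset_partition[of "filter_mset ?P C" "\<lambda>r. r ! j"]) (simp add: filter_filter_mset conj_commute)
  then have SP: "size (filter_mset ?P C) = size (filter_mset (\<lambda>r. ?P r \<and> r ! j = True) C) + size (filter_mset (\<lambda>r. ?P r \<and> r ! j = False) C)"
    by (metis size_union)
  have B: "2 ^ card W * size (filter_mset (\<lambda>r. ?P r \<and> r ! j = b) C) = 96" for b
  proof -
    have "2 ^ Suc (card W) * size (filter_mset (\<lambda>r. ?P r \<and> r ! j = b) C) = 192"
      using A[of b] unfolding e cW .
    then show ?thesis by simp
  qed
  show ?case using SP B[of True] B[of False] by (simp add: add_mult_distrib2)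
qed


lemma G:
  assumes "finite U" "U \<subseteq> {0..<10}" "W \<subseteq> {0..<10}" "U \<inter> W = {}" "card U + card W \<le> 5"
  shows "2 ^ card W * sum_mset (image_mset (psi y U) (filter_mset (\<lambda>r. \<forall>i\<in>W. r ! i = f i) C))
           = (if U = {} then 192 else 0)"
  using assms
proof (induction U arbitrary: W f rule: finite_induct)
  case empty
  have "2 ^ card W * size (filter_mset (\<lambda>r. \<forall>i\<in>W. r ! i = f i) C) = 192"
    using count_W empty by simp
  then have "(2::int) ^ card W * int (size (filter_mset (\<lambda>r. \<forall>i\<in>W. r ! i = f i) C)) = 192"
    by (metis (mono_tags, lifting) of_nat_mult of_nat_numeral of_nat_power)
  moreover have "sum_mset (image_mset (psi y {}) M) = int (size M)" for M
    by (induction M) (auto simp: psi_def)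
  ultimately show ?case by simp
next
  case (insert j U)
  let ?P = "\<lambda>r. \<forall>i\<in>W. r ! i = f i"
  have jW: "j \<notin> W" using insert.prems by auto
  have fW: "finite W" using insert.prems(2) finite_subset by blast
  have cW: "card (insert j W) = Suc (card W)" using fW jW by simp
  have IH: "2 ^ Suc (card W) * sum_mset (image_mset (psi y U) (filter_mset (\<lambda>r. ?P r \<and> r ! j = b) C))
           = (if U = {} then 192 else 0)" for b
  proof -
    have e: "(\<lambda>r. \<forall>i\<in>insert j W. r ! i = (f(j:=b)) i) = (\<lambda>r. ?P r \<and> r ! j = b)"
      using jW by (auto simp: fun_eq_iff)
    have "2 ^ card (insert j W) * sum_mset (image_mset (psi y U) (filter_mset (\<lambda>r. \<forall>i\<in>insert j W. r ! i = (f(j:=b)) i) C))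
           = (if U = {} then 192 else 0)"
      using insert.IH[of "insert j W" "f(j:=b)"] insert.prems insert.hyps cW by auto
    then show ?thesis unfolding e cW .
  qed
  have ps: "psi y (insert j U) r = (if r ! j = y j then 1 else -1) * psi y U r" for r
    using insert.hyps by (simp add: psi_def)
  have neg: "sum_mset (image_mset (\<lambda>r. - g r) M) = - sum_mset (image_mset g M)" for g :: "bool list \<Rightarrow> int" and M
    by (induction M) auto
  have "sum_mset (image_mset (psi y (insert j U)) (filter_mset ?P C))
     = sum_mset (image_mset (psi y (insert j U)) (filter_mset (\<lambda>r. r ! j = y j) (filter_mset ?P C)))
     + sum_mset (image_mset (psi y (insert j U)) (filter_mset (\<lambda>r. \<not> r ! j = y j) (filter_mset ?P C)))"
    by (rule sum_mset_split)
  also have "sum_mset (image_mset (psi y (insert j U)) (filter_mset (\<lambda>r. r ! j = y j) (filter_mset ?P C)))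
     = sum_mset (image_mset (psi y U) (filter_mset (\<lambda>r. ?P r \<and> r ! j = y j) C))"
  proof -
    have "filter_mset (\<lambda>r. r ! j = y j) (filter_mset ?P C) = filter_mset (\<lambda>r. ?P r \<and> r ! j = y j) C"
      by (auto simp: filter_filter_mset intro!: filter_mset_cong)
    moreover have "image_mset (psi y (insert j U)) (filter_mset (\<lambda>r. ?P r \<and> r ! j = y j) C)
        = image_mset (psi y U) (filter_mset (\<lambda>r. ?P r \<and> r ! j = y j) C)"
      by (rule image_mset_cong) (auto simp: ps)
    ultimately show ?thesis by simp
  qed
  also have "sum_mset (image_mset (psi y (insert j U)) (filter_mset (\<lambda>r. \<not> r ! j = y j) (filter_mset ?P C)))
     = - sum_mset (image_mset (psi y U) (filter_mset (\<lambda>r. ?P r \<and> r ! j = (\<not> y j)) C))"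
  proof -
    have "filter_mset (\<lambda>r. \<not> r ! j = y j) (filter_mset ?P C) = filter_mset (\<lambda>r. ?P r \<and> r ! j = (\<not> y j)) C"
      by (auto simp: filter_filter_mset intro!: filter_mset_cong)
    moreover have "image_mset (psi y (insert j U)) (filter_mset (\<lambda>r. ?P r \<and> r ! j = (\<not> y j)) C)
        = image_mset (\<lambda>r. - psi y U r) (filter_mset (\<lambda>r. ?P r \<and> r ! j = (\<not> y j)) C)"
      by (rule image_mset_cong) (auto simp: ps)
    ultimately show ?thesis using neg by simp
  qed
  finally have "sum_mset (image_mset (psi y (insert j U)) (filter_mset ?P C)) =
      sum_mset (image_mset (psi y U) (filter_mset (\<lambda>r. ?P r \<and> r ! j = y j) C)) -
      sum_mset (image_mset (psi y U) (filter_mset (\<lambda>r. ?P r \<and> r ! j = (\<not> y j)) C))" by simp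
  moreover have "(2::int) * 2 ^ card W * sum_mset (image_mset (psi y U) (filter_mset (\<lambda>r. ?P r \<and> r ! j = y j) C))
      = 2 * 2 ^ card W * sum_mset (image_mset (psi y U) (filter_mset (\<lambda>r. ?P r \<and> r ! j = (\<not> y j)) C))"
    using IH[of "y j"] IH[of "\<not> y j"] by simp
  ultimately show ?case by (simp add: right_diff_distrib)
qed

end


lemma psi_sq: "psi y V r * psi y V r = 1"
proof -
  have "psi y V r * psi y V r = (\<Prod>i\<in>V. (if r ! i = y i then 1 else -1) * (if r ! i = y i then 1 else (-1::int)))"
    unfolding psi_def by (rule prod.distrib[symmetric])
  also have "\<dots> = 1" by (intro prod.neutral) auto
  finally show ?thesis .
qed

lemma psi_mult:
  assumes "finite V" "finite V'"
  shows "psi y V r * psi y V' r = psi y ((V - V') \<union> (V' - V)) r"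
proof -
  have a: "psi y V r = psi y (V - V') r * psi y (V \<inter> V') r"
  proof -
    have "V = (V - V') \<union> (V \<inter> V')" by auto
    then have "psi y V r = psi y ((V - V') \<union> (V \<inter> V')) r" by simp
    also have "\<dots> = psi y (V - V') r * psi y (V \<inter> V') r"
      unfolding psi_def using assms by (intro prod.union_disjoint) auto
    finally show ?thesis .
  qed
  have b: "psi y V' r = psi y (V' - V) r * psi y (V \<inter> V') r"
  proof -
    have "V' = (V' - V) \<union> (V \<inter> V')" by auto
    then have "psi y V' r = psi y ((V' - V) \<union> (V \<inter> V')) r" by simp
    also have "\<dots> = psi y (V' - V) r * psi y (V \<inter> V') r"
      unfolding psi_def using assms by (intro prod.union_disjoint) auto
    finally show ?thesis .
  qed
  have c: "psi y ((V - V') \<union> (V' - V)) r = psi y (V - V') r * psi y (V' - V) r"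
    unfolding psi_def using assms by (intro prod.union_disjoint) auto
  have d: "psi y (V \<inter> V') r * psi y (V \<inter> V') r = 1" by (rule psi_sq)
  have "psi y V r * psi y V' r = psi y (V - V') r * psi y (V' - V) r * (psi y (V \<inter> V') r * psi y (V \<inter> V') r)"
    unfolding a b by (simp add: algebra_simps)
  then show ?thesis unfolding c d by simp
qed

lemma sum_mset_sum_swap:
  "sum_mset (image_mset (\<lambda>r. \<Sum>a\<in>A. g a r) M) = (\<Sum>a\<in>A. sum_mset (image_mset (g a) M))"
  by (induction M) (auto simp: sum.distrib)

lemma subsets2_insert:
  assumes "j \<notin> I"
  shows "{V. V \<subseteq> insert j I \<and> card V = 2} = {V. V \<subseteq> I \<and> card V = 2} \<union> (\<lambda>i. {j, i}) ` I"
proof (rule set_eqI, rule iffI)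
  fix V assume V: "V \<in> {V. V \<subseteq> insert j I \<and> card V = 2}"
  show "V \<in> {V. V \<subseteq> I \<and> card V = 2} \<union> (\<lambda>i. {j, i}) ` I"
  proof (cases "j \<in> V")
    case True
    from V obtain a b where ab: "V = {a, b}" "a \<noteq> b" by (auto simp: card_2_iff)
    then show ?thesis using True V assms by auto
  next
    case False then show ?thesis using V by auto
  qed
next
  fix V assume "V \<in> {V. V \<subseteq> I \<and> card V = 2} \<union> (\<lambda>i. {j, i}) ` I"
  then show "V \<in> {V. V \<subseteq> insert j I \<and> card V = 2}" using assms
    by (auto, metis card_2_iff)
qed

lemma sq_sum:
  fixes e :: "nat \<Rightarrow> int"
  assumes "finite I" "\<And>i. e i * e i = 1"
  shows "(\<Sum>i\<in>I. e i)^2 = int (card I) + 2 * (\<Sum>V\<in>{V. V \<subseteq> I \<and> card V = 2}. \<Prod>i\<in>V. e i)"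
  using assms(1)
proof (induction I rule: finite_induct)
  case empty
  have "{V. V \<subseteq> {} \<and> card V = 2} = {}" by auto
  then show ?case by simp
next
  case (insert j I)
  have fin: "finite {V. V \<subseteq> I \<and> card V = 2}" using insert.hyps by simp
  have disj: "{V. V \<subseteq> I \<and> card V = 2} \<inter> (\<lambda>i. {j, i}) ` I = {}" using insert.hyps by auto
  have inj: "inj_on (\<lambda>i. {j, i}) I" using insert.hyps by (auto simp: inj_on_def doubleton_eq_iff)
  have im: "(\<Sum>V\<in>(\<lambda>i. {j, i}) ` I. \<Prod>i\<in>V. e i) = (\<Sum>i\<in>I. e j * e i)"
  proof -
    have "(\<Sum>V\<in>(\<lambda>i. {j, i}) ` I. \<Prod>i\<in>V. e i) = (\<Sum>i\<in>I. \<Prod>k\<in>{j, i}. e k)"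
      using inj by (rule sum.reindex_cong) auto
    also have "\<dots> = (\<Sum>i\<in>I. e j * e i)"
    proof (rule sum.cong)
      fix i assume "i \<in> I" then have "j \<noteq> i" using insert.hyps by auto
      then show "(\<Prod>k\<in>{j, i}. e k) = e j * e i" by simp
    qed simp
    finally show ?thesis .
  qed
  have "(\<Sum>V\<in>{V. V \<subseteq> insert j I \<and> card V = 2}. \<Prod>i\<in>V. e i)
      = (\<Sum>V\<in>{V. V \<subseteq> I \<and> card V = 2}. \<Prod>i\<in>V. e i) + (\<Sum>i\<in>I. e j * e i)"
    unfolding subsets2_insert[OF insert.hyps(2)] using fin disj insert.hyps im
    by (subst sum.union_disjoint) auto
  moreover have "(\<Sum>i\<in>insert j I. e i)^2 = e j * e j + 2 * e j * (\<Sum>i\<in>I. e i) + (\<Sum>i\<in>I. e i)^2"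
    using insert.hyps by (simp add: power2_eq_square algebra_simps)
  moreover have "(\<Sum>i\<in>I. e j * e i) = e j * (\<Sum>i\<in>I. e i)" by (simp add: sum_distrib_left)
  ultimately show ?case using insert.IH insert.hyps assms(2)
    by (simp add: algebra_simps)
qed

lemma sum_subsets_le2:
  assumes "finite I"
  shows "(\<Sum>V\<in>{V. V \<subseteq> I \<and> card V \<le> 2}. g V) = g {} + (\<Sum>i\<in>I. g {i}) + (\<Sum>V\<in>{V. V \<subseteq> I \<and> card V = 2}. g V)"
proof -
  have eq: "{V. V \<subseteq> I \<and> card V \<le> 2} = ({{}} \<union> (\<lambda>i. {i}) ` I) \<union> {V. V \<subseteq> I \<and> card V = 2}"
  proof (rule set_eqI, rule iffI)
    fix V assume "V \<in> {V. V \<subseteq> I \<and> card V \<le> 2}"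
    then have V: "V \<subseteq> I" "card V \<le> 2" by auto
    have fV: "finite V" using V assms finite_subset by blast
    have "card V = 0 \<or> card V = 1 \<or> card V = 2" using V by auto
    then show "V \<in> ({{}} \<union> (\<lambda>i. {i}) ` I) \<union> {V. V \<subseteq> I \<and> card V = 2}"
      using V fV by (auto simp: card_1_singleton_iff)
  qed auto
  have f2: "finite {V. V \<subseteq> I \<and> card V = 2}" using assms by simp
  have "(\<Sum>V\<in>({{}} \<union> (\<lambda>i. {i}) ` I) \<union> {V. V \<subseteq> I \<and> card V = 2}. g V)
     = (\<Sum>V\<in>{{}} \<union> (\<lambda>i. {i}) ` I. g V) + (\<Sum>V\<in>{V. V \<subseteq> I \<and> card V = 2}. g V)"
    using assms f2 by (intro sum.union_disjoint) auto
  also have "(\<Sum>V\<in>{{}} \<union> (\<lambda>i. {i}) ` I. g V) = g {} + (\<Sum>V\<in>(\<lambda>i. {i}) ` I. g V)"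
    using assms by (subst sum.union_disjoint) auto
  also have "(\<Sum>V\<in>(\<lambda>i. {i}) ` I. g V) = (\<Sum>i\<in>I. g {i})"
    by (subst sum.reindex) (auto simp: inj_on_def)
  finally show ?thesis unfolding eq .
qed



context oa begin

lemma count_le1:
  assumes xC: "x \<in># C"
  shows "count C x \<le> 1"
proof -
  define y where "y = (\<lambda>i. x ! i)"
  define I where "I = {1..<10::nat}"
  define VV where "VV = {V. V \<subseteq> I \<and> card V \<le> 2}"
  define R where "R = filter_mset (\<lambda>r. \<forall>i\<in>{0}. r ! i = y i) C"
  define L where "L r = (\<Sum>V\<in>VV. psi y V r)" for r
  have finI: "finite I" and cI: "card I = 9" by (auto simp: I_def)
  have finVV: "finite VV" unfolding VV_def using finI by simp
  have psi0: "psi y {} r = 1" for r by (simp add: psi_def)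
  have "2 ^ card {0::nat} * sum_mset (image_mset (psi y {}) R) = 192"
    using G[of "{}" "{0}" y "y"] unfolding R_def by simp
  moreover have "sum_mset (image_mset (psi y {}) M) = int (size M)" for M
    by (induction M) (auto simp: psi0)
  ultimately have sR: "int (size R) = 96" by simp
  have van: "sum_mset (image_mset (psi y D) R) = 0" if "D \<subseteq> I" "D \<noteq> {}" "card D \<le> 4" for D
  proof -
    have "finite D" using that finI finite_subset by blast
    moreover have "D \<subseteq> {0..<10}" "D \<inter> {0} = {}" "card D + card {0::nat} \<le> 5"
      using that unfolding I_def by auto
    ultimately have "2 ^ card {0::nat} * sum_mset (image_mset (psi y D) R) = (if D = {} then 192 else 0)"
      using G[of D "{0}" y y] unfolding R_def by auto
    then have "2 ^ card {0::nat} * sum_mset (image_mset (psi y D) R) = 0" using that by simp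
    then show ?thesis by simp
  qed
  have symd: "(V - V') \<union> (V' - V) \<subseteq> I \<and> card ((V - V') \<union> (V' - V)) \<le> 4 \<and> ((V - V') \<union> (V' - V) = {} \<longleftrightarrow> V = V')"
    if "V \<in> VV" "V' \<in> VV" for V V'
  proof -
    have f: "finite V" "finite V'" using that finI finite_subset unfolding VV_def by auto
    have "card ((V - V') \<union> (V' - V)) \<le> card (V - V') + card (V' - V)" by (rule card_Un_le)
    also have "\<dots> \<le> card V + card V'" using f by (intro add_mono card_mono) auto
    also have "\<dots> \<le> 4" using that unfolding VV_def by auto
    finally show ?thesis using that unfolding VV_def by auto
  qed
  have LL: "L r * L r = (\<Sum>V\<in>VV. \<Sum>V'\<in>VV. psi y ((V - V') \<union> (V' - V)) r)" for r
  proof -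
    have "L r * L r = (\<Sum>V\<in>VV. \<Sum>V'\<in>VV. psi y V r * psi y V' r)"
      unfolding L_def by (rule sum_product)
    also have "\<dots> = (\<Sum>V\<in>VV. \<Sum>V'\<in>VV. psi y ((V - V') \<union> (V' - V)) r)"
    proof (intro sum.cong refl)
      fix V V' assume "V \<in> VV" "V' \<in> VV"
      then have "finite V" "finite V'" using finI finite_subset unfolding VV_def by auto
      then show "psi y V r * psi y V' r = psi y ((V - V') \<union> (V' - V)) r" by (rule psi_mult)
    qed
    finally show ?thesis .
  qed
  have mom: "sum_mset (image_mset (\<lambda>r. L r * L r) R) = 96 * int (card VV)"
  proof -
    have "sum_mset (image_mset (\<lambda>r. L r * L r) R)
        = (\<Sum>V\<in>VV. sum_mset (image_mset (\<lambda>r. \<Sum>V'\<in>VV. psi y ((V - V') \<union> (V' - V)) r) R))"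
      unfolding LL by (rule sum_mset_sum_swap)
    also have "\<dots> = (\<Sum>V\<in>VV. \<Sum>V'\<in>VV. sum_mset (image_mset (psi y ((V - V') \<union> (V' - V))) R))"
      by (intro sum.cong refl sum_mset_sum_swap)
    also have "\<dots> = (\<Sum>V\<in>VV. \<Sum>V'\<in>VV. if V = V' then 96 else 0)"
    proof (intro sum.cong refl)
      fix V V' assume a: "V \<in> VV" "V' \<in> VV"
      show "sum_mset (image_mset (psi y ((V - V') \<union> (V' - V))) R) = (if V = V' then 96 else 0)"
      proof (cases "V = V'")
        case True
        then show ?thesis using sR by (simp add: psi0 cong: image_mset_cong)
      next
        case False
        then show ?thesis using symd[OF a] van by auto
      qed
    qed
    also have "\<dots> = 96 * int (card VV)" using finVV by simp
    finally show ?thesis .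
  qed
  have Lform: "2 * L r = (\<Sum>i\<in>I. if r ! i = y i then 1 else -1)^2 + 2 * (\<Sum>i\<in>I. if r ! i = y i then 1 else -1) - 7" for r
  proof -
    define e where "e i = (if r ! i = y i then 1 else (-1::int))" for i
    have ee: "e i * e i = 1" for i by (simp add: e_def)
    have pe: "psi y V r = (\<Prod>i\<in>V. e i)" for V by (simp add: psi_def e_def)
    have "L r = psi y {} r + (\<Sum>i\<in>I. psi y {i} r) + (\<Sum>V\<in>{V. V \<subseteq> I \<and> card V = 2}. psi y V r)"
      unfolding L_def VV_def by (rule sum_subsets_le2[OF finI])
    also have "\<dots> = 1 + (\<Sum>i\<in>I. e i) + (\<Sum>V\<in>{V. V \<subseteq> I \<and> card V = 2}. \<Prod>i\<in>V. e i)"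
      by (simp add: pe)
    finally have "L r = 1 + (\<Sum>i\<in>I. e i) + (\<Sum>V\<in>{V. V \<subseteq> I \<and> card V = 2}. \<Prod>i\<in>V. e i)" .
    moreover have "(\<Sum>i\<in>I. e i)^2 = 9 + 2 * (\<Sum>V\<in>{V. V \<subseteq> I \<and> card V = 2}. \<Prod>i\<in>V. e i)"
      using sq_sum[OF finI ee] cI by simp
    ultimately show ?thesis unfolding e_def[symmetric] by simp
  qed
  have aform: "(\<Sum>i\<in>I. if r ! i = y i then 1 else (-1::int)) = 9 - 2 * int (card {i\<in>I. r ! i \<noteq> y i})" for r
  proof -
    let ?A = "{i. r ! i = y i}"
    have "(\<Sum>i\<in>I. if r ! i = y i then 1 else (-1::int))
        = (\<Sum>i\<in>I \<inter> ?A. 1) + (\<Sum>i\<in>I \<inter> - ?A. -1)"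
      by (rule sum.If_cases[OF finI])
    also have "\<dots> = int (card (I \<inter> ?A)) - int (card (I \<inter> - ?A))" by simp
    finally have s1: "(\<Sum>i\<in>I. if r ! i = y i then 1 else (-1::int)) = int (card (I \<inter> ?A)) - int (card (I \<inter> - ?A))" .
    have "card ((I \<inter> ?A) \<union> (I \<inter> - ?A)) = card (I \<inter> ?A) + card (I \<inter> - ?A)"
      using finI by (intro card_Un_disjoint) auto
    moreover have "(I \<inter> ?A) \<union> (I \<inter> - ?A) = I" by auto
    moreover have "I \<inter> - ?A = {i\<in>I. r ! i \<noteq> y i}" by auto
    ultimately show ?thesis using s1 cI by simp
  qed
  have zle: "card {i\<in>I. r ! i \<noteq> y i} \<le> 9" for r
    using card_mono[OF finI, of "{i\<in>I. r ! i \<noteq> y i}"] cI by auto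
  have Lx: "L x = 46"
  proof -
    have "{i\<in>I. x ! i \<noteq> y i} = {}" by (auto simp: y_def)
    then have h: "card {i\<in>I. x ! i \<noteq> y i} = 0" by (simp only: card.empty)
    have "2 * L x = 92" using Lform[of x] unfolding aform[of x] h by simp
    then show ?thesis by simp
  qed
  have cVV: "int (card VV) = 46"
  proof -
    have "L x = (\<Sum>V\<in>VV. 1)" unfolding L_def by (intro sum.cong refl) (simp add: psi_def y_def)
    then show ?thesis using Lx by simp
  qed
  have Lr: "4 \<le> L r * L r" if "r \<in># R" "r \<noteq> x" for r
  proof -
    define z where "z = card {i\<in>I. r ! i \<noteq> y i}"
    have lr: "length r = 10" using that(1) len_C unfolding R_def by auto
    have lx: "length x = 10" using xC len_C by auto
    have r0: "r ! 0 = x ! 0" using that(1) unfolding R_def y_def by auto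
    have "z \<noteq> 0"
    proof
      assume "z = 0"
      then have "{i\<in>I. r ! i \<noteq> y i} = {}" unfolding z_def using finI by simp
      then have h1: "\<forall>i. 1 \<le> i \<and> i < 10 \<longrightarrow> r ! i = x ! i" unfolding I_def y_def by auto
      have "\<forall>i<10. r ! i = x ! i"
      proof (intro allI impI)
        fix i :: nat assume "i < 10"
        then show "r ! i = x ! i" using h1 r0 by (cases "i = 0") auto
      qed
      then have "r = x" using lr lx by (auto intro: nth_equalityI)
      then show False using that(2) by simp
    qed
    moreover have "z \<le> 9" unfolding z_def by (rule zle)
    ultimately have "z \<in> {1,2,3,4,5,6,7,8,9}" by auto
    moreover have "2 * L r = (9 - 2 * int z)^2 + 2 * (9 - 2 * int z) - 7"
      using Lform[of r] aform[of r] unfolding z_def by simp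
    ultimately have "L r \<in> {28, 14, 4, -2, -4}" by auto
    then show ?thesis by auto
  qed
  have "sum_mset (image_mset (\<lambda>r. 4 + (if r = x then 2112 else 0)) R) \<le> sum_mset (image_mset (\<lambda>r. L r * L r) R)"
  proof (rule sum_mset_mono)
    fix r assume "r \<in># R"
    then show "4 + (if r = x then 2112 else 0) \<le> L r * L r" using Lr Lx by auto
  qed
  moreover have "sum_mset (image_mset (\<lambda>r. 4 + (if r = x then 2112 else (0::int))) R)
     = 4 * int (size R) + 2112 * int (count R x)"
    by (simp add: sum_mset.distrib sum_mset_delta)
  moreover have "count R x = count C x" unfolding R_def y_def by simp
  ultimately have "4 * 96 + 2112 * int (count C x) \<le> 96 * 46" using mom cVV sR by simp
  then show ?thesis by simp
qed

end


lemma sum_mset_if_const: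
  "sum_mset (image_mset (\<lambda>r. if P r then c else 0) M) = c * int (size (filter_mset P M))"
  by (induction M) (auto simp: algebra_simps)

lemma prod_pm: "(\<Prod>i\<in>U. 1 + g i) = (\<Sum>V\<in>Pow U. \<Prod>i\<in>V. g i)" if "finite U" for g :: "nat \<Rightarrow> int"
  using prod_add[OF that, of g "\<lambda>_. 1"] by (simp add: add.commute)

lemma prod_two_or_zero:
  fixes g :: "nat \<Rightarrow> int"
  assumes "finite U" "\<And>i. g i = 0 \<or> g i = 2"
  shows "(\<Prod>i\<in>U. g i) = (if \<forall>i\<in>U. g i = 2 then 2 ^ card U else 0)"
proof (cases "\<forall>i\<in>U. g i = 2")
  case True then show ?thesis by simp
next
  case False
  then obtain i where "i \<in> U" "g i \<noteq> 2" by auto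
  then have "g i = 0" using assms(2) by blast
  then show ?thesis using False \<open>i \<in> U\<close> assms(1) by (auto intro: prod_zero)
qed

lemma parity_sum:
  fixes f :: "'a \<Rightarrow> int"
  assumes "finite A"
  shows "even (\<Sum>x\<in>A. f x) \<longleftrightarrow> even (card {x\<in>A. odd (f x)})"
  using assms
proof (induction A rule: finite_induct)
  case empty then show ?case by simp
next
  case (insert a A)
  have "{x\<in>insert a A. odd (f x)} = (if odd (f a) then insert a {x\<in>A. odd (f x)} else {x\<in>A. odd (f x)})" by auto
  then show ?case using insert by (auto simp: card_insert_if)
qed

definition SS :: "bool list multiset \<Rightarrow> nat set \<Rightarrow> int" where
  "SS C U = sum_mset (image_mset (psi (\<lambda>_. False) U) C)"

context oa begin

abbreviation "S \<equiv> SS C"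

lemma S_empty: "S {} = 192"
  using G[of "{}" "{}" "\<lambda>_. False" "\<lambda>_. False"] by (simp add: SS_def)

lemma S_small: "U \<subseteq> {0..<10} \<Longrightarrow> U \<noteq> {} \<Longrightarrow> card U \<le> 5 \<Longrightarrow> S U = 0"
  using G[of U "{}" "\<lambda>_. False" "\<lambda>_. False"] by (simp add: SS_def finite_subset)

lemma S_sum:
  assumes "U \<subseteq> {0..<10}"
  shows "(\<Sum>V\<in>Pow U. S V) = 2 ^ card U * int (size (filter_mset (\<lambda>r. \<forall>i\<in>U. \<not> r ! i) C))"
proof -
  have fU: "finite U" using assms finite_subset by blast
  have "(\<Sum>V\<in>Pow U. S V) = sum_mset (image_mset (\<lambda>r. \<Sum>V\<in>Pow U. psi (\<lambda>_. False) V r) C)"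
    unfolding SS_def by (rule sum_mset_sum_swap[symmetric])
  also have "\<dots> = sum_mset (image_mset (\<lambda>r. if \<forall>i\<in>U. \<not> r ! i then 2 ^ card U else 0) C)"
  proof (rule arg_cong[where f = sum_mset], rule image_mset_cong)
    fix r
    have "(\<Sum>V\<in>Pow U. psi (\<lambda>_. False) V r) = (\<Prod>i\<in>U. 1 + (if r ! i = False then 1 else -1))"
      unfolding psi_def using prod_pm[OF fU] by simp
    also have "\<dots> = (if \<forall>i\<in>U. \<not> r ! i then 2 ^ card U else 0)"
      using prod_two_or_zero[OF fU, of "\<lambda>i. 1 + (if r ! i = False then 1 else -1)"] by auto
    finally show "(\<Sum>V\<in>Pow U. psi (\<lambda>_. False) V r) = (if \<forall>i\<in>U. \<not> r ! i then 2 ^ card U else 0)" .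
  qed
  also have "\<dots> = 2 ^ card U * int (size (filter_mset (\<lambda>r. \<forall>i\<in>U. \<not> r ! i) C))"
    by (rule sum_mset_if_const)
  finally show ?thesis .
qed

lemma S_dvd: "U \<subseteq> {0..<10} \<Longrightarrow> 64 dvd S U"
proof (induction "card U" arbitrary: U rule: less_induct)
  case less
  have fU: "finite U" using less.prems finite_subset by blast
  show ?case
  proof (cases "card U \<le> 5")
    case True
    then show ?thesis using S_small[OF less.prems] S_empty by (cases "U = {}") auto
  next
    case False
    have "(\<Sum>V\<in>Pow U. S V) = S U + (\<Sum>V\<in>Pow U - {U}. S V)"
      using fU by (subst sum.remove[of _ U]) auto
    moreover have "64 dvd (\<Sum>V\<in>Pow U - {U}. S V)"
    proof (rule dvd_sum)
      fix V assume V: "V \<in> Pow U - {U}"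
      then have "V \<subset> U" by auto
      then have "card V < card U" using fU by (rule psubset_card_mono[rotated])
      then show "64 dvd S V" using less.hyps V less.prems by auto
    qed
    moreover have "64 dvd (2::int) ^ card U"
    proof -
      have "card U = 6 + (card U - 6)" using False by simp
      then have "(2::int) ^ card U = 2 ^ 6 * 2 ^ (card U - 6)" by (metis power_add)
      then show ?thesis by simp
    qed
    ultimately show ?thesis using S_sum[OF less.prems]
      by (metis (no_types, lifting) add_diff_cancel_right' dvd_diff dvd_mult2)
  qed
qed

lemma S_sum_128: "U \<subseteq> {0..<10} \<Longrightarrow> 7 \<le> card U \<Longrightarrow> 128 dvd (\<Sum>V\<in>Pow U. S V)"
proof -
  assume a: "U \<subseteq> {0..<10}" "7 \<le> card U"
  have "card U = 7 + (card U - 7)" using a by simp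
  then have "(2::int) ^ card U = 2 ^ 7 * 2 ^ (card U - 7)" by (metis power_add)
  then show ?thesis using S_sum[OF a(1)] by simp
qed

end


context oa begin

lemma parseval: "(\<Sum>U\<in>Pow {0..<10}. S U * S U) = 1024 * 192"
proof -
  let ?p = "\<lambda>U r. psi (\<lambda>_. False) U r"
  have sq: "S U * S U = (\<Sum>r\<in>#C. \<Sum>r'\<in>#C. ?p U r * ?p U r')" for U
    unfolding SS_def by (simp add: sum_mset_distrib_left sum_mset_distrib_right mult.commute)
  have inner: "(\<Sum>U\<in>Pow {0..<10}. ?p U r * ?p U r') = (if r = r' then 1024 else 0)"
    if "r \<in># C" "r' \<in># C" for r r'
  proof -
    have "(\<Sum>U\<in>Pow {0..<10}. ?p U r * ?p U r')
        = (\<Sum>U\<in>Pow {0..<10::nat}. \<Prod>i\<in>U. (if r ! i = False then 1 else -1) * (if r' ! i = False then 1 else (-1::int)))"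
      unfolding psi_def by (intro sum.cong refl) (simp add: prod.distrib)
    also have "\<dots> = (\<Prod>i\<in>{0..<10::nat}. 1 + (if r ! i = False then 1 else -1) * (if r' ! i = False then 1 else (-1::int)))"
      by (rule prod_pm[symmetric]) simp
    also have "\<dots> = (if \<forall>i\<in>{0..<10::nat}. 1 + (if r ! i = False then 1 else -1) * (if r' ! i = False then 1 else (-1::int)) = 2 then 2 ^ card {0..<10::nat} else 0)"
      by (rule prod_two_or_zero) auto
    also have "\<dots> = (if r = r' then 1024 else 0)"
    proof -
      have "(\<forall>i\<in>{0..<10::nat}. 1 + (if r ! i = False then 1 else -1) * (if r' ! i = False then 1 else (-1::int)) = 2)
          \<longleftrightarrow> (\<forall>i<10. r ! i = r' ! i)" by auto
      also have "\<dots> \<longleftrightarrow> r = r'" using len_C[OF that(1)] len_C[OF that(2)] by (auto intro: nth_equalityI)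
      finally show ?thesis by simp
    qed
    finally show ?thesis .
  qed
  have "(\<Sum>U\<in>Pow {0..<10}. S U * S U) = (\<Sum>U\<in>Pow {0..<10}. \<Sum>r\<in>#C. \<Sum>r'\<in>#C. ?p U r * ?p U r')"
    by (simp add: sq)
  also have "\<dots> = (\<Sum>r\<in>#C. \<Sum>U\<in>Pow {0..<10}. \<Sum>r'\<in>#C. ?p U r * ?p U r')"
    by (rule sum_mset_sum_swap[symmetric])
  also have "\<dots> = (\<Sum>r\<in>#C. \<Sum>r'\<in>#C. \<Sum>U\<in>Pow {0..<10}. ?p U r * ?p U r')"
    by (simp add: sum_mset_sum_swap)
  also have "\<dots> = (\<Sum>r\<in>#C. \<Sum>r'\<in>#C. if r = r' then 1024 else 0)"
    by (intro arg_cong[where f = sum_mset] image_mset_cong) (simp add: inner)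
  also have "\<dots> = (\<Sum>r\<in>#C. 1024)"
  proof (intro arg_cong[where f = sum_mset] image_mset_cong)
    fix r assume r: "r \<in># C"
    have "count C r = 1" using count_le1[OF r] r by (simp add: Suc_le_eq antisym)
    then show "(\<Sum>r'\<in>#C. if r = r' then 1024 else 0) = (1024::int)" by (simp add: sum_mset_delta')
  qed
  also have "\<dots> = 1024 * 192" using size_C by simp
  finally show ?thesis .
qed

lemma False_oa: False
proof -
  define N where "N = {0..<10::nat}"
  define B where "B = {U. U \<subseteq> N \<and> 6 \<le> card U}"
  define s where "s U = S U div 64" for U
  have Ss: "U \<subseteq> N \<Longrightarrow> S U = 64 * s U" for U using S_dvd unfolding s_def N_def by auto
  have finN: "finite N" by (simp add: N_def)
  have BP: "B \<subseteq> Pow N" unfolding B_def by auto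
  have finB: "finite B" using BP finN finite_subset by blast
  have decomp: "(\<Sum>U\<in>Pow W. f U) = (\<Sum>U\<in>{U\<in>Pow W. U \<in> B}. f U) + f {}"
    if "W \<subseteq> N" "\<And>U. U \<subseteq> W \<Longrightarrow> U \<noteq> {} \<Longrightarrow> U \<notin> B \<Longrightarrow> f U = 0" for W and f :: "nat set \<Rightarrow> int"
  proof -
    have fW: "finite W" using that finN finite_subset by blast
    have "{} \<notin> B" unfolding B_def by auto
    have "(\<Sum>U\<in>Pow W. f U) = (\<Sum>U\<in>Pow W. (if U \<in> B then f U else 0) + (if U = {} then f {} else 0))"
      using that(2) \<open>{} \<notin> B\<close> by (intro sum.cong refl) auto
    also have "\<dots> = (\<Sum>U\<in>Pow W. if U \<in> B then f U else 0) + (\<Sum>U\<in>Pow W. if U = {} then f {} else 0)"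
      by (rule sum.distrib)
    also have "(\<Sum>U\<in>Pow W. if U \<in> B then f U else 0) = (\<Sum>U\<in>{U\<in>Pow W. U \<in> B}. f U)"
      using sum.inter_filter[of "Pow W" f "\<lambda>U. U \<in> B"] fW by simp
    also have "(\<Sum>U\<in>Pow W. if U = {} then f {} else 0) = f {}"
      using fW by (simp add: sum.delta')
    finally show ?thesis .
  qed
  have small: "U \<subseteq> N \<Longrightarrow> U \<noteq> {} \<Longrightarrow> U \<notin> B \<Longrightarrow> S U = 0" for U
    using S_small unfolding B_def N_def by auto
  have "(\<Sum>U\<in>Pow N. S U * S U) = (\<Sum>U\<in>{U\<in>Pow N. U \<in> B}. S U * S U) + S {} * S {}"
    by (rule decomp) (auto simp: small)
  moreover have "{U\<in>Pow N. U \<in> B} = B" unfolding B_def by auto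
  ultimately have "(\<Sum>U\<in>B. S U * S U) = 1024 * 192 - 192 * 192"
    using parseval S_empty unfolding N_def by simp
  moreover have "(\<Sum>U\<in>B. S U * S U) = 4096 * (\<Sum>U\<in>B. s U * s U)"
    unfolding sum_distrib_left by (intro sum.cong refl) (simp add: Ss B_def)
  ultimately have s39: "(\<Sum>U\<in>B. s U * s U) = 39" by simp
  define Od where "Od = {U\<in>B. odd (s U)}"
  have "int (card Od) \<le> 39"
  proof -
    have "int (card Od) = (\<Sum>U\<in>Od. 1)" by simp
    also have "\<dots> \<le> (\<Sum>U\<in>Od. s U * s U)"
    proof (rule sum_mono)
      fix U assume "U \<in> Od"
      then have "s U \<noteq> 0" unfolding Od_def by auto
      then show "1 \<le> s U * s U" by (smt (verit) mult_le_cancel_left1 zero_less_mult_iff)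
    qed
    also have "\<dots> \<le> (\<Sum>U\<in>B. s U * s U)"
      using finB by (intro sum_mono2) (auto simp: Od_def)
    finally show ?thesis using s39 by simp
  qed
  moreover have "40 \<le> card Od"
  proof (rule comb)
    show "Od \<subseteq> {V. V \<subseteq> {0..<10} \<and> 6 \<le> card V}" unfolding Od_def B_def N_def by auto
  next
    fix U :: "nat set" assume U: "U \<subseteq> {0..<10}" "7 \<le> card U"
    then have UN: "U \<subseteq> N" unfolding N_def by simp
    have "(\<Sum>V\<in>Pow U. S V) = 64 * (\<Sum>V\<in>Pow U. s V)"
      unfolding sum_distrib_left using UN by (intro sum.cong refl) (auto simp: Ss)
    moreover have "128 dvd (\<Sum>V\<in>Pow U. S V)" using S_sum_128 U by simp
    ultimately have ev: "even (\<Sum>V\<in>Pow U. s V)" by auto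
    have "(\<Sum>V\<in>Pow U. s V) = (\<Sum>V\<in>{V\<in>Pow U. V \<in> B}. s V) + s {}"
      using UN by (intro decomp) (auto simp: s_def small)
    moreover have "s {} = 3" using S_empty by (simp add: s_def)
    ultimately have "odd (\<Sum>V\<in>{V\<in>Pow U. V \<in> B}. s V)" using ev by auto
    moreover have "finite {V\<in>Pow U. V \<in> B}" using finB by simp
    ultimately have "odd (card {V\<in>{V\<in>Pow U. V \<in> B}. odd (s V)})" using parity_sum by blast
    moreover have "{V\<in>{V\<in>Pow U. V \<in> B}. odd (s V)} = {V\<in>Od. V \<subseteq> U}" unfolding Od_def by auto
    ultimately show "odd (card {V\<in>Od. V \<subseteq> U})" by simp
  qed
  ultimately show False by simp
qed

end

theorem corollary4p2:
  shows "\<not> (\<exists>C. binary_OA 10 192 5 C)"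
proof
  assume "\<exists>C. binary_OA 10 192 5 C"
  then obtain C where "binary_OA 10 192 5 C" by blast
  then interpret oa C by unfold_locales
  show False by (rule False_oa)
qed

end
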